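(* Let $A\in\mathbb{C}^{m\times n}$ have rank $r>0$ with $\mathrm{rank}(A^{\sim}A)=\mathrm{rank}(A)$, and let $A=BC$ be a full rank factorization of $A$, where $B\in\mathbb{C}^{m\times r}$ and $C\in\mathbb{C}^{r\times n}$ both have rank $r$. Then $$A\{1,2,3^{\mathfrak{m}}\}=\left\{C_R^{-1}(B^{\sim}B)^{-1}B^{\sim} : C_R^{-1}\in\mathbb{C}^{n\times r} \text{ is a right inverse of } C\right\}.$$
   Context: For a positive integer $k$, the Minkowski metric matrix of order $k$ is $G_k=\mathrm{diag}(1,-I_{k-1})$ (with $G_1=(1)$). For $A\in\mathbb{C}^{m\times n}$, the Minkowski adjoint is $A^{\sim}=G_nA^*G_m$, where $A^*$ is the conjugate transpose. For $A\in\mathbb{C}^{m\times n}$ and $X\in\mathbb{C}^{n\times m}$ consider the equations $(1)\ AXA=A$, $(2)\ XAX=X$, $(3^{\mathfrak{m}})\ (AX)^{\sim}=AX$, $(4^{\mathfrak{m}})\ (XA)^{\sim}=XA$; $A\{i,\dots,k\}$ denotes the set of all $X$ satisfying the listed equations. A right inverse of $C$ is a matrix $C_R^{-1}$ with $CC_R^{-1}=I_r$. *)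

theory Defs
  imports "Jordan_Normal_Form.DL_Rank"
begin

definition minkowski_G :: "nat \<Rightarrow> complex mat" where
  "minkowski_G k = mat k k (\<lambda>(i,j). if i = j then (if i = 0 then 1 else -1) else 0)"

definition ctrans :: "complex mat \<Rightarrow> complex mat" where
  "ctrans A = mat (dim_col A) (dim_row A) (\<lambda>(i,j). cnj (A $$ (j,i)))"

definition mink_adj :: "complex mat \<Rightarrow> complex mat" where
  "mink_adj A = minkowski_G (dim_col A) * ctrans A * minkowski_G (dim_row A)"

definition mrank :: "complex mat \<Rightarrow> nat" where
  "mrank A = vec_space.rank (dim_row A) A"

text \<open>Inverse of a square matrix (meaningful when it is invertible).\<close>
definition minv :: "complex mat \<Rightarrow> complex mat" where
  "minv M = (THE X. X \<in> carrier_mat (dim_row M) (dim_row M) \<and>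
                    M * X = 1\<^sub>m (dim_row M) \<and> X * M = 1\<^sub>m (dim_row M))"

definition mink_inv_123 :: "complex mat \<Rightarrow> complex mat set" where
  "mink_inv_123 A = {X \<in> carrier_mat (dim_col A) (dim_row A).
      A * X * A = A \<and> X * A * X = X \<and> mink_adj (A * X) = A * X}"

end

theory Submission imports Defs begin

lemma G_carrier[simp]: "minkowski_G k \<in> carrier_mat k k"
  unfolding minkowski_G_def by auto

lemma G_dims[simp]: "dim_row (minkowski_G k) = k" "dim_col (minkowski_G k) = k"
  unfolding minkowski_G_def by auto

lemma massoc: "dim_col A = dim_row B \<Longrightarrow> dim_col B = dim_row C \<Longrightarrow> A * B * C = A * (B * C)"
  by (rule assoc_mult_mat[of A "dim_row A" "dim_col A" B "dim_col B" C "dim_col C"]) auto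

lemma G_G: "minkowski_G k * minkowski_G k = 1\<^sub>m k"
proof (rule eq_matI)
  fix i j assume ij: "i < dim_row (1\<^sub>m k)" "j < dim_col (1\<^sub>m k)"
  then have i: "i < k" and j: "j < k" by auto
  have "(minkowski_G k * minkowski_G k) $$ (i,j) =
     (\<Sum>l\<in>{0..<k}. (if i = l then (if i = 0 then 1 else -1) else 0) * (if l = j then (if l = 0 then 1 else -1) else 0))"
    using i j unfolding minkowski_G_def by (simp add: scalar_prod_def)
  also have "\<dots> = (\<Sum>l\<in>{0..<k}. if l = i then (if i = j then 1 else 0) else 0)"
    by (rule sum.cong) auto
  also have "\<dots> = (1\<^sub>m k) $$ (i,j)" using i j by simp
  finally show "(minkowski_G k * minkowski_G k) $$ (i,j) = (1\<^sub>m k) $$ (i,j)" .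
qed auto

lemma ctrans_carrier[simp]: "A \<in> carrier_mat m n \<Longrightarrow> ctrans A \<in> carrier_mat n m"
  unfolding ctrans_def by auto

lemma ctrans_dims[simp]: "dim_row (ctrans A) = dim_col A" "dim_col (ctrans A) = dim_row A"
  unfolding ctrans_def by auto

lemma ctrans_index[simp]: "i < dim_col A \<Longrightarrow> j < dim_row A \<Longrightarrow> ctrans A $$ (i,j) = cnj (A $$ (j,i))"
  unfolding ctrans_def by auto

lemma ctrans_ctrans[simp]: "ctrans (ctrans A) = A"
  by (rule eq_matI) auto

lemma ctrans_G[simp]: "ctrans (minkowski_G k) = minkowski_G k"
  by (rule eq_matI) (auto simp: minkowski_G_def)

lemma ctrans_one[simp]: "ctrans (1\<^sub>m k) = 1\<^sub>m k"
  by (rule eq_matI) auto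

lemma ctrans_mult:
  assumes "A \<in> carrier_mat m k" "B \<in> carrier_mat k n"
  shows "ctrans (A * B) = ctrans B * ctrans A"
proof (rule eq_matI)
  fix i j assume "i < dim_row (ctrans B * ctrans A)" "j < dim_col (ctrans B * ctrans A)"
  then have i: "i < n" and j: "j < m" using assms by auto
  show "ctrans (A * B) $$ (i, j) = (ctrans B * ctrans A) $$ (i, j)"
    using i j assms by (simp add: scalar_prod_def mult.commute)
qed (use assms in auto)

lemma adj_carrier[simp]: "A \<in> carrier_mat m n \<Longrightarrow> mink_adj A \<in> carrier_mat n m"
  unfolding mink_adj_def
  by (metis G_carrier carrier_matD(1) carrier_matD(2) ctrans_carrier mult_carrier_mat)

lemma adj_mult:
  assumes A: "A \<in> carrier_mat m k" and B: "B \<in> carrier_mat k n"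
  shows "mink_adj (A * B) = mink_adj B * mink_adj A"
proof -
  let ?Gn = "minkowski_G n" and ?Gm = "minkowski_G m" and ?Gk = "minkowski_G k"
  have cA: "ctrans A \<in> carrier_mat k m" and cB: "ctrans B \<in> carrier_mat n k" using A B by auto
  have "mink_adj B * mink_adj A = (?Gn * ctrans B * ?Gk) * (?Gk * ctrans A * ?Gm)"
    unfolding mink_adj_def using A B by simp
  also have "\<dots> = ?Gn * ctrans B * (?Gk * ?Gk) * ctrans A * ?Gm"
    using A B by (simp add: massoc carrier_matD)
  also have "\<dots> = ?Gn * (ctrans B * ctrans A) * ?Gm"
    unfolding G_G using A B cB by (simp add: massoc carrier_matD)
  also have "\<dots> = mink_adj (A * B)"
    unfolding mink_adj_def using A B by (simp add: ctrans_mult)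
  finally show ?thesis by simp
qed

lemma adj_adj:
  assumes A: "A \<in> carrier_mat m n"
  shows "mink_adj (mink_adj A) = A"
proof -
  let ?Gn = "minkowski_G n" and ?Gm = "minkowski_G m"
  have cA: "ctrans A \<in> carrier_mat n m" using A by auto
  have "mink_adj (mink_adj A) = ?Gm * ctrans (?Gn * ctrans A * ?Gm) * ?Gn"
    unfolding mink_adj_def[of "mink_adj A"] using adj_carrier[OF A] A by (simp add: mink_adj_def)
  also have "ctrans (?Gn * ctrans A * ?Gm) = ?Gm * A * ?Gn"
  proof -
    have "ctrans (?Gn * ctrans A * ?Gm) = ctrans ?Gm * ctrans (?Gn * ctrans A)"
      using A cA by (intro ctrans_mult[where k=m]) auto
    also have "ctrans (?Gn * ctrans A) = A * ?Gn"
      using A cA ctrans_mult[of ?Gn n n "ctrans A" m] by simp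
    finally show ?thesis using A by (simp add: massoc)
  qed
  also have "?Gm * (?Gm * A * ?Gn) * ?Gn = (?Gm * ?Gm) * A * (?Gn * ?Gn)"
    using A by (simp add: massoc)
  also have "\<dots> = A" unfolding G_G using A by simp
  finally show ?thesis .
qed

lemma adj_one[simp]: "mink_adj (1\<^sub>m k) = 1\<^sub>m k"
  unfolding mink_adj_def by (simp add: G_G)

lemma (in vec_space) rank_mult_le:
  assumes X: "X \<in> carrier_mat n k" and Y: "Y \<in> carrier_mat k p"
  shows "rank (X * Y) \<le> rank X"
proof -
  have XY: "X * Y \<in> carrier_mat n p" using X Y by auto
  let ?W = "span (set (cols X))"
  let ?U = "span (set (cols (X*Y)))"
  have sub: "?U \<subseteq> ?W"
  proof -
    have "?U = col_space (X*Y)" unfolding col_space_def ..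
    also have "\<dots> \<subseteq> col_space X"
    proof
      fix y assume "y \<in> col_space (X*Y)"
      then obtain x where x: "x \<in> carrier_vec p" "y = (X*Y) *\<^sub>v x" "y \<in> carrier_vec n"
        using col_space_eq[OF XY] XY by auto
      have "y = X *\<^sub>v (Y *\<^sub>v x)" using x X Y by (simp add: assoc_mult_mat_vec)
      moreover have "Y *\<^sub>v x \<in> carrier_vec (dim_col X)" using X Y x by auto
      ultimately show "y \<in> col_space X" using col_space_eq[OF X] x X by auto
    qed
    finally show ?thesis unfolding col_space_def .
  qed
  have cX: "set (cols X) \<subseteq> carrier_vec n" using X cols_dim by blast
  have cXY: "set (cols (X*Y)) \<subseteq> carrier_vec n" using XY cols_dim by blast
  have sW: "subspace class_ring ?W V" using span_is_subspace[OF cX] .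
  have sU: "subspace class_ring ?U V" using span_is_subspace[OF cXY] .
  have vsW: "vectorspace class_ring (vs ?W)" using subspace_is_vs[OF sW] .
  have nested: "subspace class_ring ?U (vs ?W)" using nested_subspaces[OF sW sU sub] .
  have fW: "vectorspace.fin_dim class_ring (vs ?W)" using fin_dim_span_cols[OF X] .
  have fU: "vectorspace.fin_dim class_ring (vs ?U)" using fin_dim_span_cols[OF XY] .
  have "vectorspace.dim class_ring ((vs ?W)\<lparr>carrier := ?U\<rparr>) \<le> vectorspace.dim class_ring (vs ?W)"
    using vectorspace.subspace_dim[OF vsW nested fW] fU by simp
  then show ?thesis unfolding rank_def by simp
qed

lemma (in vec_space) rank_lt_kernel:
  assumes A: "A \<in> carrier_mat n nc" and v: "v \<in> carrier_vec nc" "v \<noteq> 0\<^sub>v nc" "A *\<^sub>v v = 0\<^sub>v n"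
  shows "rank A < nc"
proof -
  obtain S where S: "maximal S (\<lambda>T. T \<subseteq> set (cols A) \<and> lin_indpt T)"
    using maximal_exists[of "(\<lambda>T. T \<subseteq> set (cols A) \<and> lin_indpt T)" "card (set (cols A))" "{}"]
    by (meson List.finite_set card_mono empty_iff empty_subsetI finite_lin_indpt2 rev_finite_subset)
  have rk: "rank A = card S" using rank_card_indpt[OF A S] .
  have Ssub: "S \<subseteq> set (cols A)" "lin_indpt S" using S unfolding maximal_def by auto
  have le: "card (set (cols A)) \<le> nc"
    using A by (metis card_length cols_length carrier_matD(2))
  show ?thesis
  proof (cases "distinct (cols A)")
    case True
    have "lin_dep (set (cols A))" using lin_depI[OF A v True] .
    then have "S \<noteq> set (cols A)" using Ssub by auto
    then have "card S < card (set (cols A))" using Ssub by (simp add: psubset_card_mono)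
    then show ?thesis using rk le by linarith
  next
    case False
    then have "card (set (cols A)) < nc"
      using A by (metis card_distinct card_length cols_length carrier_matD(2) le_neq_implies_less)
    moreover have "card S \<le> card (set (cols A))" using Ssub by (simp add: card_mono)
    ultimately show ?thesis using rk by linarith
  qed
qed


lemma inv_exists:
  fixes M :: "complex mat"
  assumes M: "M \<in> carrier_mat k k" and d: "det M \<noteq> 0"
  obtains Mi where "Mi \<in> carrier_mat k k" "M * Mi = 1\<^sub>m k" "Mi * M = 1\<^sub>m k"
proof -
  have "M \<in> Units (ring_mat TYPE(complex) k k)" using det_non_zero_imp_unit[OF M d] .
  then show ?thesis using that unfolding Units_def ring_mat_def by auto
qed

lemma inv_unique:
  fixes M X Y :: "complex mat"
  assumes "M \<in> carrier_mat k k" "X \<in> carrier_mat k k" "Y \<in> carrier_mat k k"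
    "X * M = 1\<^sub>m k" "M * Y = 1\<^sub>m k"
  shows "X = Y"
proof -
  have "X = X * (M * Y)" using assms right_mult_one_mat[OF assms(2)] by simp
  also have "\<dots> = (X * M) * Y" using assms(1-3) by (simp add: assoc_mult_mat)
  also have "\<dots> = Y" using assms left_mult_one_mat[OF assms(3)] by simp
  finally show ?thesis .
qed

lemma minv_eq:
  assumes "M \<in> carrier_mat k k" "Mi \<in> carrier_mat k k" "M * Mi = 1\<^sub>m k" "Mi * M = 1\<^sub>m k"
  shows "minv M = Mi"
  unfolding minv_def
proof (rule the_equality)
  show "Mi \<in> carrier_mat (dim_row M) (dim_row M) \<and> M * Mi = 1\<^sub>m (dim_row M) \<and> Mi * M = 1\<^sub>m (dim_row M)"
    using assms by auto
next
  fix X assume "X \<in> carrier_mat (dim_row M) (dim_row M) \<and> M * X = 1\<^sub>m (dim_row M) \<and> X * M = 1\<^sub>m (dim_row M)"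
  then show "X = Mi" using assms inv_unique[of M k X Mi] by auto
qed

theorem theorem4p4:
  fixes A B C :: "complex mat" and m n r :: nat
  assumes "A \<in> carrier_mat m n" and "B \<in> carrier_mat m r" and "C \<in> carrier_mat r n"
    and "r > 0" and "mrank A = r" and "mrank B = r" and "mrank C = r"
    and "A = B * C"
    and "mrank (mink_adj A * A) = mrank A"
  shows "mink_inv_123 A =
    {CR * minv (mink_adj B * B) * mink_adj B | CR. CR \<in> carrier_mat n r \<and> C * CR = 1\<^sub>m r}"
proof -
  note Ac = assms(1) and Bc = assms(2) and Cc = assms(3) and ABC = assms(8)
  define BA where "BA = mink_adj B"
  define M where "M = BA * B"
  have BAc: "BA \<in> carrier_mat r m" unfolding BA_def using Bc by simp
  have Mc: "M \<in> carrier_mat r r" unfolding M_def using BAc Bc by simp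
  have dims: "dim_row A = m" "dim_col A = n" "dim_row B = m" "dim_col B = r"
    "dim_row C = r" "dim_col C = n" "dim_row BA = r" "dim_col BA = m" "dim_row M = r" "dim_col M = r"
    using Ac Bc Cc BAc Mc by auto
  have CAc: "mink_adj C \<in> carrier_mat n r" using Cc by simp
  have AAeq: "mink_adj A * A = (mink_adj C * M) * C"
  proof -
    have "mink_adj A = mink_adj C * BA" unfolding ABC BA_def using Bc Cc by (simp add: adj_mult)
    then show ?thesis unfolding M_def ABC using CAc by (simp add: massoc dims carrier_matD)
  qed
  have detM: "det M \<noteq> 0"
  proof
    assume "det M = 0"
    then obtain y where y: "y \<in> carrier_vec r" "y \<noteq> 0\<^sub>v r" "M *\<^sub>v y = 0\<^sub>v r"
      using det_0_iff_vec_prod_zero_field[OF Mc] by auto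
    have Pc: "mink_adj C * M \<in> carrier_mat n r" using CAc Mc by simp
    have "(mink_adj C * M) *\<^sub>v y = mink_adj C *\<^sub>v (M *\<^sub>v y)"
      using CAc Mc y by (simp add: assoc_mult_mat_vec)
    also have "\<dots> = 0\<^sub>v n" unfolding y(3) using CAc
      by (intro eq_vecI) (auto simp: scalar_prod_def)
    finally have "vec_space.rank n (mink_adj C * M) < r"
      using vec_space.rank_lt_kernel[OF Pc y(1,2)] by simp
    moreover have "vec_space.rank n ((mink_adj C * M) * C) \<le> vec_space.rank n (mink_adj C * M)"
      using vec_space.rank_mult_le[OF Pc Cc] .
    moreover have "mrank (mink_adj A * A) = vec_space.rank n ((mink_adj C * M) * C)"
      unfolding mrank_def AAeq using CAc by simp
    ultimately show False using assms(5,9) by simp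
  qed
  obtain Mi where Mic: "Mi \<in> carrier_mat r r" and MMi: "M * Mi = 1\<^sub>m r" and MiM: "Mi * M = 1\<^sub>m r"
    using inv_exists[OF Mc detM] by blast
  have minvM: "minv (mink_adj B * B) = Mi" using minv_eq[OF Mc Mic MMi MiM] unfolding M_def BA_def .
  have minvM2: "minv (BA * B) = Mi" using minvM unfolding BA_def .
  have dMi: "dim_row Mi = r" "dim_col Mi = r" using Mic by auto
  have Madj: "mink_adj M = M" unfolding M_def BA_def
    using adj_mult[OF adj_carrier[OF Bc] Bc] adj_adj[OF Bc] by simp
  have BAadj: "mink_adj BA = B" unfolding BA_def using Bc by (simp add: adj_adj)
  have Miadj: "mink_adj Mi = Mi"
  proof -
    have Mic': "mink_adj Mi \<in> carrier_mat r r" using Mic by simp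
    have "mink_adj Mi * M = 1\<^sub>m r"
      using adj_mult[OF Mc Mic] MMi Madj by simp
    then show ?thesis using inv_unique[OF Mc Mic' Mic _ MMi] by simp
  qed
  have MiBAB: "Mi * (BA * B) = 1\<^sub>m r" using MiM unfolding M_def .
  show ?thesis
  proof (rule equalityI; rule subsetI)
    fix X assume "X \<in> mink_inv_123 A"
    then have Xc: "X \<in> carrier_mat n m" and AXA: "A * X * A = A" and XAX: "X * A * X = X"
      and AXadj: "mink_adj (A * X) = A * X"
      unfolding mink_inv_123_def using Ac by auto
    have dX: "dim_row X = n" "dim_col X = m" using Xc by auto
    define N where "N = C * X * B"
    have Nc: "N \<in> carrier_mat r r" unfolding N_def using Cc Xc Bc by simp
    have NC: "N * C = C"
    proof -
      have "B * (C * (X * (B * C))) = B * C" using AXA unfolding ABC by (simp add: massoc dims dX)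
      then have "Mi * (BA * (B * (C * (X * (B * C))))) = Mi * (BA * (B * C))" by simp
      then have "(Mi * (BA * B)) * (C * (X * (B * C))) = (Mi * (BA * B)) * C"
        by (simp add: massoc dims dX dMi)
      then show ?thesis unfolding MiBAB N_def using Cc Xc Bc by (simp add: massoc dims dX)
    qed
    have NN: "N * N = N"
    proof -
      have "N * N = C * (X * (B * C) * X) * B" unfolding N_def by (simp add: massoc dims dX)
      also have "\<dots> = N" using XAX unfolding ABC N_def by (simp add: massoc dims dX)
      finally show ?thesis .
    qed
    have "vec_space.rank r (N * C) \<le> vec_space.rank r N" using vec_space.rank_mult_le[OF Nc Cc] .
    moreover have "vec_space.rank r N \<le> r" using vec_space.rank_le_nc[OF Nc] .
    moreover have "vec_space.rank r C = r" using assms(7) unfolding mrank_def dims .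
    ultimately have "vec_space.rank r N = r" unfolding NC by simp
    then have "det N \<noteq> 0" using vec_space.det_rank_iff[OF Nc] by simp
    then obtain Ni where Nic: "Ni \<in> carrier_mat r r" and NiN: "Ni * N = 1\<^sub>m r"
      using inv_exists[OF Nc] by blast
    have N1: "N = 1\<^sub>m r"
    proof -
      have "N = (Ni * N) * N" using NiN Nc by simp
      also have "\<dots> = Ni * (N * N)" using Nic Nc by (simp add: assoc_mult_mat)
      also have "\<dots> = 1\<^sub>m r" using NN NiN by simp
      finally show ?thesis .
    qed
    have CXc: "C * X \<in> carrier_mat r m" using Cc Xc by simp
    have "mink_adj (A * X) = mink_adj (C * X) * BA"
    proof -
      have "A * X = B * (C * X)" unfolding ABC by (simp add: massoc dims dX)
      then show ?thesis using adj_mult[OF Bc CXc] unfolding BA_def by simp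
    qed
    then have eq1: "mink_adj (C * X) * BA = B * (C * X)" using AXadj unfolding ABC
      by (simp add: massoc dims dX)
    have "BA * mink_adj (C * X) = mink_adj (C * X * B)" using adj_mult[OF CXc Bc] unfolding BA_def ..
    also have "\<dots> = 1\<^sub>m r" using N1 unfolding N_def by simp
    finally have eq2: "BA * mink_adj (C * X) = 1\<^sub>m r" .
    have "M * (C * X) = BA * (B * (C * X))" unfolding M_def by (simp add: massoc dims dX)
    also have "\<dots> = BA * (mink_adj (C * X) * BA)" using eq1 by simp
    also have "\<dots> = (BA * mink_adj (C * X)) * BA" using adj_carrier[OF CXc] by (simp add: massoc dims carrier_matD)
    also have "\<dots> = BA" using eq2 BAc by simp
    finally have MCX: "M * (C * X) = BA" .
    have CX: "C * X = Mi * BA"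
    proof -
      have "C * X = (Mi * M) * (C * X)" using MiM left_mult_one_mat[OF CXc] by simp
      also have "\<dots> = Mi * BA" using MCX Mic Mc CXc by (simp add: assoc_mult_mat)
      finally show ?thesis .
    qed
    have "X = X * (B * (C * X))" using XAX unfolding ABC by (simp add: massoc dims dX)
    also have "\<dots> = (X * B) * Mi * BA" using CX by (simp add: massoc dims dX dMi)
    finally have Xeq: "X = (X * B) * Mi * BA" .
    have XBc: "X * B \<in> carrier_mat n r" using Xc Bc by simp
    have CXB: "C * (X * B) = 1\<^sub>m r" using N1 unfolding N_def by (simp add: massoc dims dX)
    show "X \<in> {CR * minv (mink_adj B * B) * mink_adj B | CR. CR \<in> carrier_mat n r \<and> C * CR = 1\<^sub>m r}"
      unfolding BA_def[symmetric] minvM2 using Xeq XBc CXB by blast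
  next
    fix X assume "X \<in> {CR * minv (mink_adj B * B) * mink_adj B | CR. CR \<in> carrier_mat n r \<and> C * CR = 1\<^sub>m r}"
    then obtain CR where CRc: "CR \<in> carrier_mat n r" and CCR: "C * CR = 1\<^sub>m r"
      and X: "X = CR * Mi * BA" unfolding BA_def[symmetric] minvM2 by blast
    have dCR: "dim_row CR = n" "dim_col CR = r" using CRc by auto
    have Xc: "X \<in> carrier_mat n m" unfolding X using CRc Mic BAc by simp
    have AX: "A * X = B * (Mi * BA)"
    proof -
      have "A * X = B * ((C * CR) * (Mi * BA))" unfolding ABC X by (simp add: massoc dims dCR dMi)
      then show ?thesis unfolding CCR using Mic BAc by simp
    qed
    have AXA: "A * X * A = A"
    proof -
      have "A * X * A = B * ((Mi * (BA * B)) * C)" unfolding AX unfolding ABC by (simp add: massoc dims dMi)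
      then show ?thesis unfolding MiBAB ABC using Cc by simp
    qed
    have XAX: "X * A * X = X"
    proof -
      have "X * A * X = X * (A * X)" using Xc by (simp add: massoc dims)
      also have "\<dots> = CR * ((Mi * (BA * B)) * (Mi * BA))" unfolding AX unfolding X
        by (simp add: massoc dims dMi dCR)
      finally have "X * A * X = CR * ((Mi * (BA * B)) * (Mi * BA))" .
      then show ?thesis unfolding MiBAB X using Mic BAc by (simp add: massoc dims dMi dCR)
    qed
    have AXadj: "mink_adj (A * X) = A * X"
    proof -
      have MiBAc: "Mi * BA \<in> carrier_mat r m" using Mic BAc by simp
      have "mink_adj (A * X) = mink_adj (Mi * BA) * mink_adj B" unfolding AX using adj_mult[OF Bc MiBAc] .
      also have "mink_adj (Mi * BA) = mink_adj BA * mink_adj Mi" using adj_mult[OF Mic BAc] .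
      finally show ?thesis unfolding BAadj Miadj AX BA_def[symmetric] by (simp add: massoc dims dMi)
    qed
    show "X \<in> mink_inv_123 A" unfolding mink_inv_123_def using Xc AXA XAX AXadj dims by auto
  qed
qed

end
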